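(* Let $d, n, D, k$ be positive integers, let $h:\mathbb{R}\to\mathbb{R}$ be any function (applied entrywise), let $\sigma$ denote the sigmoid function (applied entrywise), and let $W_o\in\mathbb{R}^{d\times kD}$, $W_s\in\mathbb{R}^{kD\times d}$, $W_1,\dots,W_k\in\mathbb{R}^{D\times d}$. For $X\in\mathbb{R}^{d\times n}$ define $$H(X)=\begin{bmatrix} h(W_1X)\\ h(W_1X)\circ h(W_2X)\\ \vdots\\ \prod_{m=1}^k h(W_mX)\end{bmatrix}\mathbf{1}_n\in\mathbb{R}^{kD\times 1},\qquad \mathrm{PoM}(X)=W_o\left[\sigma(W_sX)\circ \big(H(X)\mathbf{1}_n^\top\big)\right]\in\mathbb{R}^{d\times n},$$ where $\circ$ and $\prod$ denote entrywise (Hadamard) products, the blocks are stacked vertically, and $\mathbf{1}_n\in\mathbb{R}^n$ is the all-ones vector. Then $\mathrm{PoM}$ is permutation equivariant: for every $X\in\mathbb{R}^{d\times n}$ and every $n\times n$ permutation matrix $P$ (permuting columns), $\mathrm{PoM}(XP)=\mathrm{PoM}(X)P$.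
   Context: The columns of $X$ are viewed as a sequence (set) of $n$ tokens in $\mathbb{R}^d$; $\mathrm{PoM}$ is called the Polynomial Mixer of degree $k$. *)

theory Defs
  imports "HOL-Combinatorics.Permutations" "Jordan_Normal_Form.Matrix"
begin

definition sigmoid :: "real \<Rightarrow> real" where
  "sigmoid x = 1 / (1 + exp (- x))"

definition hadamard :: "real mat \<Rightarrow> real mat \<Rightarrow> real mat" where
  "hadamard A B = mat (dim_row A) (dim_col A) (\<lambda>(i,j). A $$ (i,j) * B $$ (i,j))"

text \<open>Block m (0-indexed): the Hadamard product h(W_1 X) o ... o h(W_(m+1) X).\<close>
fun hblock :: "(real \<Rightarrow> real) \<Rightarrow> real mat list \<Rightarrow> real mat \<Rightarrow> nat \<Rightarrow> real mat" where
  "hblock h Ws X 0 = map_mat h ((Ws ! 0) * X)"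
| "hblock h Ws X (Suc m) = hadamard (hblock h Ws X m) (map_mat h ((Ws ! Suc m) * X))"

fun vstack :: "real mat list \<Rightarrow> real mat" where
  "vstack [] = zero_mat 0 0"
| "vstack [A] = A"
| "vstack (A # As) = A @\<^sub>r vstack As"

definition ones_col :: "nat \<Rightarrow> real mat" where
  "ones_col n = mat n 1 (\<lambda>_. 1)"

definition ones_row :: "nat \<Rightarrow> real mat" where
  "ones_row n = mat 1 n (\<lambda>_. 1)"

definition Hmat :: "(real \<Rightarrow> real) \<Rightarrow> real mat list \<Rightarrow> real mat \<Rightarrow> real mat" where
  "Hmat h Ws X = vstack (map (hblock h Ws X) [0..<length Ws]) * ones_col (dim_col X)"

definition PoM :: "(real \<Rightarrow> real) \<Rightarrow> real mat \<Rightarrow> real mat \<Rightarrow> real mat list \<Rightarrow> real mat \<Rightarrow> real mat" where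
  "PoM h Wo Wsel Ws X =
     Wo * hadamard (map_mat sigmoid (Wsel * X)) (Hmat h Ws X * ones_row (dim_col X))"

text \<open>n x n permutation matrix: P e_j = e_(pi j), so X P permutes the columns of X.\<close>
definition perm_matrix :: "nat \<Rightarrow> real mat \<Rightarrow> bool" where
  "perm_matrix n P \<longleftrightarrow> (\<exists>\<pi>. \<pi> permutes {..<n} \<and>
      P = mat n n (\<lambda>(i,j). if i = \<pi> j then 1 else 0))"

end

theory Submission
  imports Defs
begin

lemma perm_lt: "\<pi> permutes {..<n} \<Longrightarrow> j < n \<Longrightarrow> \<pi> j < n"
  using permutes_in_image[of \<pi> "{..<n}" j] by auto

definition pmat :: "nat \<Rightarrow> (nat \<Rightarrow> nat) \<Rightarrow> real mat" where
  "pmat n \<pi> = mat n n (\<lambda>(i,j). if i = \<pi> j then 1 else 0)"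

lemma mult_pmat:
  assumes "\<pi> permutes {..<n}" "dim_col M = n"
  shows "M * pmat n \<pi> = mat (dim_row M) n (\<lambda>(i,j). M $$ (i, \<pi> j))"
proof (rule eq_matI)
  fix i j assume i: "i < dim_row (mat (dim_row M) n (\<lambda>(i,j). M $$ (i, \<pi> j)))"
    and j: "j < dim_col (mat (dim_row M) n (\<lambda>(i,j). M $$ (i, \<pi> j)))"
  have pj: "\<pi> j < n" using assms(1) j by (simp add: perm_lt)
  have "(M * pmat n \<pi>) $$ (i,j) = (\<Sum>l<n. M $$ (i,l) * (if l = \<pi> j then 1 else 0))"
    using i j assms(2) by (simp add: pmat_def scalar_prod_def row_def col_def lessThan_atLeast0)
  also have "\<dots> = M $$ (i, \<pi> j)"
    using pj by (simp add: if_distrib cong: if_cong)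
  finally show "(M * pmat n \<pi>) $$ (i,j) = mat (dim_row M) n (\<lambda>(i,j). M $$ (i, \<pi> j)) $$ (i,j)"
    using i j by simp
qed (auto simp: pmat_def)

lemma hadamard_pmat:
  assumes "\<pi> permutes {..<n}" "dim_col A = n" "dim_col B = n" "dim_row A = dim_row B"
  shows "hadamard (A * pmat n \<pi>) (B * pmat n \<pi>) = hadamard A B * pmat n \<pi>"
proof -
  have pj: "\<And>j. j < n \<Longrightarrow> \<pi> j < n" using assms(1) by (simp add: perm_lt)
  show ?thesis
    using assms pj
    by (subst mult_pmat, auto simp: hadamard_def mult_pmat intro!: eq_matI)
qed

lemma map_pmat:
  assumes "\<pi> permutes {..<n}" "dim_col A = n"
  shows "map_mat f (A * pmat n \<pi>) = map_mat f A * pmat n \<pi>"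
proof -
  have pj: "\<And>j. j < n \<Longrightarrow> \<pi> j < n" using assms(1) by (simp add: perm_lt)
  show ?thesis
    using assms pj
    by (subst mult_pmat, auto simp: mult_pmat intro!: eq_matI)
qed

lemma append_rows_pmat:
  assumes "\<pi> permutes {..<n}" "dim_col A = n" "dim_col B = n"
  shows "(A * pmat n \<pi>) @\<^sub>r (B * pmat n \<pi>) = (A @\<^sub>r B) * pmat n \<pi>"
proof -
  have pj: "\<And>j. j < n \<Longrightarrow> \<pi> j < n" using assms(1) by (simp add: perm_lt)
  have d: "dim_col (A @\<^sub>r B) = n" using assms by (simp add: append_rows_def)
  show ?thesis
    using assms pj
    by (subst mult_pmat[OF assms(1) d], auto simp: mult_pmat append_rows_def intro!: eq_matI)
qed

lemma vstack_dim: "As \<noteq> [] \<Longrightarrow> \<forall>A\<in>set As. dim_col A = n \<Longrightarrow> dim_col (vstack As) = n"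
  by (induction As rule: vstack.induct) (auto simp: append_rows_def)

lemma vstack_pmat:
  assumes "\<pi> permutes {..<n}"
  shows "As \<noteq> [] \<Longrightarrow> \<forall>A\<in>set As. dim_col A = n \<Longrightarrow>
     vstack (map (\<lambda>A. A * pmat n \<pi>) As) = vstack As * pmat n \<pi>"
proof (induction As rule: vstack.induct)
  case (3 A v va)
  then show ?case
    using append_rows_pmat[OF assms, of A "vstack (v # va)"] vstack_dim[of "v # va" n]
    by simp
qed auto

lemma hblock_pmat:
  assumes "\<pi> permutes {..<n}" "\<forall>W \<in> set Ws. W \<in> carrier_mat D d" "X \<in> carrier_mat d n"
  shows "m < length Ws \<Longrightarrow> hblock h Ws (X * pmat n \<pi>) m = hblock h Ws X m * pmat n \<pi>
      \<and> hblock h Ws X m \<in> carrier_mat D n"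
proof (induction m)
  case 0
  have W: "Ws ! 0 \<in> carrier_mat D d" using assms(2) 0 by auto
  have P: "pmat n \<pi> \<in> carrier_mat n n" by (simp add: pmat_def)
  have "Ws ! 0 * (X * pmat n \<pi>) = (Ws ! 0 * X) * pmat n \<pi>"
    using W assms(3) P by (simp add: assoc_mult_mat)
  then show ?case using map_pmat[OF assms(1), of "Ws ! 0 * X" h] W assms(3) by auto
next
  case (Suc m)
  have W: "Ws ! Suc m \<in> carrier_mat D d" using assms(2) Suc by auto
  have P: "pmat n \<pi> \<in> carrier_mat n n" by (simp add: pmat_def)
  have e: "Ws ! Suc m * (X * pmat n \<pi>) = (Ws ! Suc m * X) * pmat n \<pi>"
    using W assms(3) P by (simp add: assoc_mult_mat)
  have IH: "hblock h Ws (X * pmat n \<pi>) m = hblock h Ws X m * pmat n \<pi>" "hblock h Ws X m \<in> carrier_mat D n"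
    using Suc by auto
  show ?case
    using IH e map_pmat[OF assms(1), of "Ws ! Suc m * X" h] W assms(3)
      hadamard_pmat[OF assms(1), of "hblock h Ws X m" "map_mat h (Ws ! Suc m * X)"]
    by (auto simp: hadamard_def)
qed

lemma pmat_ones_col:
  assumes "\<pi> permutes {..<n}"
  shows "pmat n \<pi> * ones_col n = ones_col n"
proof (rule eq_matI)
  fix i j assume i: "i < dim_row (ones_col n)" and j: "j < dim_col (ones_col n)"
  have "(pmat n \<pi> * ones_col n) $$ (i,j) = (\<Sum>l<n. (if i = \<pi> l then 1 else 0))"
    using i j by (simp add: pmat_def ones_col_def scalar_prod_def row_def col_def lessThan_atLeast0)
  also have "\<dots> = (\<Sum>l<n. (if i = l then 1 else (0::real)))"
    using sum.reindex_bij_betw[OF permutes_imp_bij[OF assms], of "\<lambda>l. if i = l then 1 else (0::real)"] by simp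
  also have "\<dots> = 1" using i by (simp add: ones_col_def)
  finally show "(pmat n \<pi> * ones_col n) $$ (i,j) = ones_col n $$ (i,j)"
    using i j by (simp add: ones_col_def)
qed (auto simp: pmat_def ones_col_def)

lemma ones_row_pmat:
  assumes "\<pi> permutes {..<n}"
  shows "ones_row n * pmat n \<pi> = ones_row n"
  using perm_lt[OF assms]
  by (subst mult_pmat[OF assms]) (auto simp: ones_row_def intro!: eq_matI)

lemma vstack_rows: "As \<noteq> [] \<Longrightarrow> \<forall>A\<in>set As. dim_row A = D \<Longrightarrow> dim_row (vstack As) = length As * D"
  by (induction As rule: vstack.induct) (auto simp: append_rows_def)

theorem proposition1:
  fixes d n D k :: nat and h :: "real \<Rightarrow> real"
    and Wo Wsel X P :: "real mat" and Ws :: "real mat list"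
  assumes "d > 0" "n > 0" "D > 0" "k > 0"
    and "Wo \<in> carrier_mat d (k * D)"
    and "Wsel \<in> carrier_mat (k * D) d"
    and "length Ws = k" "\<forall>W \<in> set Ws. W \<in> carrier_mat D d"
    and "X \<in> carrier_mat d n"
    and "perm_matrix n P"
  shows "PoM h Wo Wsel Ws (X * P) = PoM h Wo Wsel Ws X * P"
proof -
  obtain \<pi> where pi: "\<pi> permutes {..<n}" and Pdef: "P = pmat n \<pi>"
    using assms(10) unfolding perm_matrix_def pmat_def by blast
  have Pc: "P \<in> carrier_mat n n" by (simp add: Pdef pmat_def)
  have XPc: "X * P \<in> carrier_mat d n" using assms(9) Pc by auto
  define L where "L = map (hblock h Ws X) [0..<k]"
  define V where "V = vstack L"
  have Lne: "L \<noteq> []" using assms(4) by (simp add: L_def)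
  have Lc: "\<forall>A\<in>set L. A \<in> carrier_mat D n"
    using hblock_pmat[OF pi assms(8) assms(9)] assms(7) by (auto simp: L_def)
  have LP: "map (hblock h Ws (X * P)) [0..<k] = map (\<lambda>A. A * P) L"
    using hblock_pmat[OF pi assms(8) assms(9)] assms(7) by (auto simp: L_def Pdef)
  have VP: "vstack (map (hblock h Ws (X * P)) [0..<k]) = V * P"
  proof -
    have "vstack (map (\<lambda>A. A * P) L) = V * P"
      unfolding V_def Pdef using vstack_pmat[OF pi Lne] Lc by auto
    then show ?thesis by (subst LP)
  qed
  have Vc: "V \<in> carrier_mat (k * D) n"
    using vstack_rows[OF Lne, of D] vstack_dim[OF Lne, of n] Lc by (auto simp: V_def L_def)
  have oc: "ones_col n \<in> carrier_mat n 1" by (simp add: ones_col_def)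
  have orr: "ones_row n \<in> carrier_mat 1 n" by (simp add: ones_row_def)
  have H: "Hmat h Ws (X * P) = Hmat h Ws X"
  proof -
    have "Hmat h Ws (X * P) = V * P * ones_col n"
      unfolding Hmat_def using VP assms(7) XPc Pc by simp
    also have "\<dots> = V * (P * ones_col n)" using Vc Pc oc by (simp add: assoc_mult_mat)
    also have "\<dots> = V * ones_col n" using pmat_ones_col[OF pi] Pdef by simp
    finally show ?thesis unfolding Hmat_def V_def L_def using assms(7,9) by simp
  qed
  have Hc: "Hmat h Ws X \<in> carrier_mat (k * D) 1"
    unfolding Hmat_def using Vc oc assms(7,9) by (simp add: V_def L_def)
  have B: "Hmat h Ws X * ones_row n = (Hmat h Ws X * ones_row n) * P"
  proof -
    have "Hmat h Ws X * ones_row n = Hmat h Ws X * (ones_row n * P)"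
      using ones_row_pmat[OF pi] Pdef by simp
    also have "\<dots> = (Hmat h Ws X * ones_row n) * P" using Hc orr Pc by (simp add: assoc_mult_mat)
    finally show ?thesis .
  qed
  have S: "map_mat sigmoid (Wsel * (X * P)) = map_mat sigmoid (Wsel * X) * P"
  proof -
    have "Wsel * (X * P) = (Wsel * X) * P" using assms(6,9) Pc by (simp add: assoc_mult_mat)
    then show ?thesis using map_pmat[OF pi, of "Wsel * X" sigmoid] Pdef assms(6,9) by simp
  qed
  have Hd: "hadamard (map_mat sigmoid (Wsel * (X * P))) (Hmat h Ws X * ones_row n)
      = hadamard (map_mat sigmoid (Wsel * X)) (Hmat h Ws X * ones_row n) * P"
    apply (subst S, subst B)
    unfolding Pdef
    apply (rule hadamard_pmat[OF pi])
    using assms(6,9) Hc orr by auto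
  have Hdc: "hadamard (map_mat sigmoid (Wsel * X)) (Hmat h Ws X * ones_row n) \<in> carrier_mat (k * D) n"
    using assms(6,9) by (simp add: hadamard_def)
  show ?thesis
    unfolding PoM_def using H Hd XPc assms(5,9) Hdc Pc by (simp add: assoc_mult_mat)
qed

end
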